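(* If $B^{(0)}(X,Y),\dots,B^{(\ell)}(X,Y)\in\mathbb F_q[X,Y]$ is a basis of the $\mathbb F_q[X]$-module $M_{s,\ell}$, then $G(X)^{s+1},\,B^{(0)}(X,Y)(Y-R(X)),\dots,B^{(\ell)}(X,Y)(Y-R(X))$ is a basis of $M_{s+1,\ell+1}$.
   Context: Let $\mathbb F_q$ be a finite field and $n<q$. Let $\alpha_0,\dots,\alpha_{n-1}$ be distinct nonzero elements of $\mathbb F_q$, $w_0,\dots,w_{n-1}$ nonzero elements of $\mathbb F_q$, $r\in\mathbb F_q^n$, $r_i'=r_i/w_i$, $G(X)=\prod_i(X-\alpha_i)$, and $R(X)$ the unique polynomial of degree less than $n$ with $R(\alpha_i)=r_i'$. For positive integers $s\le\ell$, $M_{s,\ell}$ is the $\mathbb F_q[X]$-module of all $Q\in\mathbb F_q[X,Y]$ of $Y$-degree at most $\ell$ such that for every $i$, $Q(X+\alpha_i,Y+r_i')$ has no monomials of total degree less than $s$. *)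

theory Defs
  imports "HOL-Computational_Algebra.Polynomial"
begin

text \<open>Bivariate polynomials in F[X,Y] are represented as elements of type
  'a poly poly: polynomials in Y whose coefficients are polynomials in X.
  The Y-degree is 'degree', and coeff (coeff Q j) i is the coefficient of X^i Y^j.\<close>

definition shiftXY :: "'a::comm_ring_1 poly poly \<Rightarrow> 'a \<Rightarrow> 'a \<Rightarrow> 'a poly poly" where
  "shiftXY Q a b = pcompose (map_poly (\<lambda>c. pcompose c [:a, 1:]) Q) [:[:b:], 1:]"
  \<comment> \<open>Q(X + a, Y + b)\<close>

definition no_low_monomials :: "nat \<Rightarrow> 'a::zero poly poly \<Rightarrow> bool" where
  "no_low_monomials s Q \<longleftrightarrow> (\<forall>i j. i + j < s \<longrightarrow> coeff (coeff Q j) i = 0)"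

definition M_mod :: "(nat \<Rightarrow> 'a::comm_ring_1) \<Rightarrow> (nat \<Rightarrow> 'a) \<Rightarrow> nat \<Rightarrow> nat \<Rightarrow> nat \<Rightarrow> 'a poly poly set" where
  "M_mod \<alpha> r' n s l = {Q. degree Q \<le> l \<and> (\<forall>i<n. no_low_monomials s (shiftXY Q (\<alpha> i) (r' i)))}"

definition is_module_basis :: "'a::comm_ring_1 poly poly set \<Rightarrow> nat \<Rightarrow> (nat \<Rightarrow> 'a poly poly) \<Rightarrow> bool" where
  "is_module_basis M k B \<longleftrightarrow> (\<forall>i<k. B i \<in> M) \<and>
     (\<forall>Q\<in>M. \<exists>!c. (\<forall>i\<ge>k. c i = 0) \<and> Q = (\<Sum>i<k. smult (c i) (B i)))"

end

theory Submission imports Defs begin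

lemma map_poly_add_hom:
  assumes "f 0 = 0" "\<And>x y. f (x + y) = f x + f y"
  shows "map_poly f (p + q) = map_poly f p + map_poly f q"
  by (intro poly_eqI) (simp add: coeff_map_poly assms)

lemma map_poly_mult_hom:
  assumes "f 0 = 0" "\<And>x y. f (x + y) = f x + f y" "\<And>x y. f (x * y) = f x * f y"
  shows "map_poly f (p * q) = map_poly f p * map_poly f q"
proof (induction p)
  case 0 then show ?case by simp
next
  case (pCons a p)
  have "map_poly f (pCons a p * q) = map_poly f (smult a q + pCons 0 (p * q))" by simp
  also have "\<dots> = smult (f a) (map_poly f q) + pCons 0 (map_poly f p * map_poly f q)"
    by (simp add: map_poly_add_hom[OF assms(1,2)] map_poly_smult assms map_poly_pCons pCons.IH)
  also have "\<dots> = map_poly f (pCons a p) * map_poly f q"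
    by (simp add: map_poly_pCons assms)
  finally show ?case .
qed

definition fsh :: "'a::comm_ring_1 \<Rightarrow> 'a poly \<Rightarrow> 'a poly" where
  "fsh a c = pcompose c [:a, 1:]"

lemma fsh_1: "fsh a 1 = 1"
  unfolding fsh_def by (metis pcompose_const one_pCons)

lemma fsh_hom: "fsh a 0 = 0" "fsh a (x + y) = fsh a x + fsh a y" "fsh a (x * y) = fsh a x * fsh a y"
  "fsh a 1 = 1" "fsh a [:c:] = [:c:]" "fsh a (x - y) = fsh a x - fsh a y" "fsh a (-x) = - fsh a x"
  by (simp_all add: fsh_1) (simp_all add: fsh_def pcompose_add pcompose_mult pcompose_diff pcompose_uminus)

lemma fsh_power: "fsh a (x ^ k) = fsh a x ^ k"
  by (induction k) (simp_all add: fsh_hom)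

lemma shift_alt: "shiftXY Q a b = pcompose (map_poly (fsh a) Q) [:[:b:], 1:]"
  by (simp add: shiftXY_def fsh_def[abs_def])

lemma shift_add: "shiftXY (P + Q) a b = shiftXY P a b + shiftXY Q a b"
  by (simp add: shift_alt map_poly_add_hom fsh_hom pcompose_add)

lemma shift_diff: "shiftXY (P - Q) a b = shiftXY P a b - shiftXY Q a b"
proof -
  have "shiftXY (P - Q + Q) a b = shiftXY (P - Q) a b + shiftXY Q a b" by (rule shift_add)
  then show ?thesis by (simp add: algebra_simps)
qed

lemma shift_mult: "shiftXY (P * Q) a b = shiftXY P a b * shiftXY Q a b"
  by (simp add: shift_alt map_poly_mult_hom fsh_hom pcompose_mult)

lemma shift_const: "shiftXY [:c:] a b = [:fsh a c:]"
proof -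
  have "map_poly (fsh a) [:c:] = [:fsh a c:]"
    using map_poly_pCons[of "fsh a" c 0] by (simp add: fsh_hom(1))
  then show ?thesis by (simp add: shift_alt)
qed

lemma shift_0: "shiftXY 0 a b = 0"
  by (simp add: shift_alt)

lemma shift_lin: "shiftXY [:-R, 1:] a b = [:[:b:] - fsh a R, 1:]"
  by (simp add: shift_alt fsh_hom map_poly_pCons pcompose_pCons algebra_simps)

lemma poly_fsh: "poly (fsh a c) x = poly c (a + x)"
  by (simp add: fsh_def poly_pcompose)

lemma fsh_poly: "fsh a (poly Q R) = poly (map_poly (fsh a) Q) (fsh a R)"
  by (induction Q) (simp_all add: map_poly_pCons fsh_hom)

definition lowvan :: "nat \<Rightarrow> 'a::zero poly \<Rightarrow> bool" where
  "lowvan m p \<longleftrightarrow> (\<forall>k<m. coeff p k = 0)"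

lemma lowvan_mult: "lowvan m p \<Longrightarrow> lowvan m' q \<Longrightarrow> lowvan (m + m') (p * (q::'a::comm_semiring_0 poly))"
  unfolding lowvan_def
proof (intro allI impI)
  fix k assume p: "\<forall>k<m. coeff p k = 0" and q: "\<forall>k<m'. coeff q k = 0" and k: "k < m + m'"
  have "coeff (p * q) k = (\<Sum>i\<le>k. coeff p i * coeff q (k - i))" by (rule coeff_mult)
  also have "\<dots> = 0"
  proof (rule sum.neutral, intro ballI)
    fix i assume "i \<in> {..k}"
    show "coeff p i * coeff q (k - i) = 0"
      using p q k \<open>i \<in> {..k}\<close> by (cases "i < m") (auto simp: less_diff_conv2)
  qed
  finally show "coeff (p * q) k = 0" .
qed

lemma lowvan_mono: "lowvan m p \<Longrightarrow> m' \<le> m \<Longrightarrow> lowvan m' p"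
  by (auto simp: lowvan_def)

lemma lowvan_power: "lowvan 1 (p::'a::comm_semiring_1 poly) \<Longrightarrow> lowvan k (p ^ k)"
proof (induction k)
  case 0 then show ?case by (simp add: lowvan_def)
next
  case (Suc k)
  then show ?case using lowvan_mult[of 1 p k "p^k"] by simp
qed

lemma lowvan_sum: "(\<And>i. i \<in> A \<Longrightarrow> lowvan m (f i)) \<Longrightarrow> lowvan m (sum f A)"
  by (auto simp: lowvan_def coeff_sum intro!: sum.neutral)

lemma lowvan_dvd: "lowvan m p \<Longrightarrow> [:0, 1:] ^ m dvd p"
  using monom_1_dvd_iff'[of m p] by (simp add: lowvan_def monom_altdef)

lemma coeff_lin_mult:
  "coeff (coeff ([:c0, 1:] * P) j) i = coeff (c0 * coeff P j) i + (if j = 0 then 0 else coeff (coeff P (j - 1)) i)"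
  by (cases j) (simp_all add: coeff_pCons)

lemma coeff_mult_low:
  fixes c0 :: "'a::comm_semiring_0 poly"
  assumes "coeff c0 0 = 0"
  shows "coeff (c0 * p) i = (\<Sum>k\<in>{1..i}. coeff c0 k * coeff p (i - k))"
proof -
  have "coeff (c0 * p) i = (\<Sum>k\<le>i. coeff c0 k * coeff p (i - k))" by (rule coeff_mult)
  also have "\<dots> = (\<Sum>k\<in>insert 0 {1..i}. coeff c0 k * coeff p (i - k))"
    by (rule sum.cong) auto
  also have "\<dots> = (\<Sum>k\<in>{1..i}. coeff c0 k * coeff p (i - k))"
    by (subst sum.insert) (auto simp: assms)
  finally show ?thesis .
qed

lemma no_low_lin:
  fixes P :: "'a::comm_ring_1 poly poly"
  assumes c0: "coeff c0 0 = 0" and P: "no_low_monomials s P"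
  shows "no_low_monomials (s + 1) ([:c0, 1:] * P)"
  unfolding no_low_monomials_def
proof (intro allI impI)
  fix i j assume ij: "i + j < s + 1"
  have "coeff (c0 * coeff P j) i = 0"
    unfolding coeff_mult_low[OF c0]
    by (rule sum.neutral) (use P ij in \<open>auto simp: no_low_monomials_def\<close>)
  moreover have "j \<noteq> 0 \<Longrightarrow> coeff (coeff P (j - 1)) i = 0"
    using P ij by (auto simp: no_low_monomials_def)
  ultimately show "coeff (coeff ([:c0, 1:] * P) j) i = 0"
    unfolding coeff_lin_mult by simp
qed

lemma no_low_lin_rev:
  fixes P :: "'a::comm_ring_1 poly poly"
  assumes c0: "coeff c0 0 = 0" and P: "no_low_monomials (s + 1) ([:c0, 1:] * P)"
  shows "no_low_monomials s P"
proof -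
  have "\<forall>j. i + j < s \<longrightarrow> coeff (coeff P j) i = 0" for i
  proof (induction i rule: less_induct)
    case (less i)
    show ?case
    proof (intro allI impI)
      fix j assume ij: "i + j < s"
      have "coeff (c0 * coeff P (j + 1)) i = 0"
        unfolding coeff_mult_low[OF c0]
      proof (rule sum.neutral, intro ballI)
        fix k assume k: "k \<in> {1..i}"
        then have "i - k < i" "i - k + (j + 1) < s" using ij by auto
        then show "coeff c0 k * coeff (coeff P (j + 1)) (i - k) = 0"
          using less by auto
      qed
      moreover have "coeff (coeff ([:c0, 1:] * P) (j + 1)) i = 0"
      proof -
        have "i + (j + 1) < s + 1" using ij by simp
        then show ?thesis using P unfolding no_low_monomials_def by blast
      qed
      ultimately show "coeff (coeff P j) i = 0"
        unfolding coeff_lin_mult by simp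
    qed
  qed
  then show ?thesis by (auto simp: no_low_monomials_def)
qed

lemma no_low_const: "lowvan s p \<Longrightarrow> no_low_monomials s [:p:]"
  by (auto simp: no_low_monomials_def lowvan_def coeff_pCons split: nat.splits)

lemma no_low_diff: "no_low_monomials s P \<Longrightarrow> no_low_monomials s Q \<Longrightarrow> no_low_monomials s (P - Q)"
  by (auto simp: no_low_monomials_def)

lemma no_low_0: "no_low_monomials s 0"
  by (auto simp: no_low_monomials_def)

lemma no_low_lowvan: "no_low_monomials s P \<Longrightarrow> lowvan (s - j) (coeff P j)"
  by (auto simp: no_low_monomials_def lowvan_def)

lemma pcompose_power_left: "pcompose (p ^ m) q = (pcompose p q) ^ m"
  by (induction m) (simp_all add: pcompose_mult pcompose_1)

lemma prod_lin_dvd: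
  fixes E :: "'a::idom poly" and x :: "nat \<Rightarrow> 'a"
  assumes "\<forall>i<m. [:-x i, 1:] ^ k dvd E" "\<forall>i<m. \<forall>j<m. i \<noteq> j \<longrightarrow> x i \<noteq> x j"
  shows "(\<Prod>j<m. [:-x j, 1:]) ^ k dvd E"
  using assms
proof (induction m)
  case 0 then show ?case by simp
next
  case (Suc m)
  let ?P = "\<Prod>j<m. [:-x j, 1:]"
  from Suc have "?P ^ k dvd E" by auto
  then obtain F where EF: "E = ?P ^ k * F" by (auto elim: dvdE)
  have "?P ^ k * [:-x m, 1:] ^ k dvd E"
  proof (cases "E = 0")
    case True then show ?thesis by simp
  next
    case False
    have nz: "?P ^ k \<noteq> 0" "F \<noteq> 0" using False EF by auto
    have "poly ?P (x m) \<noteq> 0"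
      using Suc.prems(2) by (auto simp: poly_prod)
    then have "poly (?P ^ k) (x m) \<noteq> 0" by (simp add: poly_power)
    then have o0: "order (x m) (?P ^ k) = 0" using order_root by blast
    have "k \<le> order (x m) E" using Suc.prems(1) False order_divides by blast
    also have "order (x m) E = order (x m) F"
      using order_mult[of "?P ^ k" F "x m"] nz o0 EF by simp
    finally have "[:-x m, 1:] ^ k dvd F" using order_divides by blast
    then show ?thesis unfolding EF by (rule mult_dvd_mono[OF dvd_refl])
  qed
  moreover have "(\<Prod>j<Suc m. [:-x j, 1:]) ^ k = ?P ^ k * [:-x m, 1:] ^ k"
    by (simp only: prod.lessThan_Suc power_mult_distrib)
  ultimately show ?case by simp
qed

lemma fsh_E_lowvan:
  fixes Q :: "'a::comm_ring_1 poly poly"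
  assumes Q: "no_low_monomials (s + 1) (shiftXY Q a b)" and Ra: "poly R a = b"
  shows "lowvan (s + 1) (fsh a (poly Q R))"
proof -
  define T where "T = fsh a R - [:b:]"
  define S where "S = shiftXY Q a b"
  have "fsh a (poly Q R) = poly (map_poly (fsh a) Q) (fsh a R)" by (rule fsh_poly)
  also have "\<dots> = poly S T"
    by (simp add: S_def T_def shift_alt poly_pcompose)
  also have "\<dots> = (\<Sum>j\<le>degree S. coeff S j * T ^ j)" by (rule poly_altdef)
  finally have eq: "fsh a (poly Q R) = (\<Sum>j\<le>degree S. coeff S j * T ^ j)" .
  have T1: "lowvan 1 T"
    using Ra by (simp add: lowvan_def T_def poly_0_coeff_0[symmetric] poly_fsh)
  show ?thesis unfolding eq
  proof (rule lowvan_sum)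
    fix j
    have "lowvan (s + 1 - j + j) (coeff S j * T ^ j)"
      by (rule lowvan_mult[OF no_low_lowvan lowvan_power[OF T1]]) (use Q S_def in simp)
    then show "lowvan (s + 1) (coeff S j * T ^ j)" by (rule lowvan_mono) simp
  qed
qed

lemma lowvan_undo:
  fixes E :: "'a::comm_ring_1 poly"
  assumes "lowvan m (fsh a E)"
  shows "[:-a, 1:] ^ m dvd E"
proof -
  from lowvan_dvd[OF assms] obtain k where k: "fsh a E = [:0, 1:] ^ m * k" by (auto elim: dvdE)
  have id: "pcompose [:a, 1:] [:-a, 1:] = [:0, 1:]" by (simp add: pcompose_pCons)
  have p01: "pcompose [:0, 1:] q = q" for q :: "'a poly" by (simp add: pcompose_pCons)
  have "E = pcompose (fsh a E) [:-a, 1:]"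
    by (simp add: fsh_def pcompose_assoc[symmetric] id)
  also have "\<dots> = [:-a, 1:] ^ m * pcompose k [:-a, 1:]"
    by (simp add: k pcompose_mult pcompose_power_left p01)
  finally show ?thesis by (metis dvd_triv_left)
qed

lemma repr_sum:
  fixes c :: "nat \<Rightarrow> 'a::comm_ring_1 poly" and B :: "nat \<Rightarrow> 'a poly poly"
  shows "(\<Sum>i<l + 2. smult (c i) (if i = 0 then [:H:] else B (i - 1) * L))
        = [:c 0 * H:] + (\<Sum>i<l + 1. smult (c (Suc i)) (B i)) * L"
proof -
  have "(\<Sum>i<l + 2. smult (c i) (if i = 0 then [:H:] else B (i - 1) * L))
     = smult (c 0) [:H:] + (\<Sum>i<l + 1. smult (c (Suc i)) (B i * L))"
  proof -
    have e: "l + 2 = Suc (l + 1)" by simp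
    show ?thesis unfolding e sum.lessThan_Suc_shift by simp
  qed
  also have "\<dots> = [:c 0 * H:] + (\<Sum>i<l + 1. smult (c (Suc i)) (B i)) * L"
    by (simp only: sum_distrib_right mult_smult_left) simp
  finally show ?thesis .
qed

theorem lemma9:
  fixes \<alpha> w r :: "nat \<Rightarrow> 'a::{finite,field}"
    and n s l :: nat
    and R :: "'a poly"
    and B :: "nat \<Rightarrow> 'a poly poly"
  assumes "n < card (UNIV :: 'a set)"
    and "\<forall>i<n. \<forall>j<n. i \<noteq> j \<longrightarrow> \<alpha> i \<noteq> \<alpha> j"
    and "\<forall>i<n. \<alpha> i \<noteq> 0"
    and "\<forall>i<n. w i \<noteq> 0"
    and "R = 0 \<or> degree R < n"
    and "\<forall>i<n. poly R (\<alpha> i) = r i / w i"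
    and "1 \<le> s" and "s \<le> l"
    and "is_module_basis (M_mod \<alpha> (\<lambda>i. r i / w i) n s l) (l + 1) B"
  shows "is_module_basis (M_mod \<alpha> (\<lambda>i. r i / w i) n (s + 1) (l + 1)) (l + 2)
           (\<lambda>i. if i = 0 then [:(\<Prod>j<n. [:- \<alpha> j, 1:]) ^ (s + 1):]
                else B (i - 1) * [:- R, 1:])"
proof -
  define b where "b = (\<lambda>i. r i / w i)"
  define G where "G = (\<Prod>j<n. [:- \<alpha> j, 1:])"
  define H where "H = G ^ (s + 1)"
  define L where "L = [:- R, 1:]"
  define Nb where "Nb = (\<lambda>i. if i = 0 then [:H:] else B (i - 1) * L)"
  have dist: "\<forall>i<n. \<forall>j<n. i \<noteq> j \<longrightarrow> \<alpha> i \<noteq> \<alpha> j" by fact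
  have Rb: "\<forall>i<n. poly R (\<alpha> i) = b i" using assms(6) by (simp add: b_def)
  have basis: "is_module_basis (M_mod \<alpha> b n s l) (l + 1) B" using assms(9) by (simp add: b_def)
  have L0: "L \<noteq> 0" by (simp add: L_def)
  have G0: "G \<noteq> 0" by (simp add: G_def)
  have H0: "H \<noteq> 0" using G0 by (simp add: H_def)
  have polyL: "poly L R = 0" by (simp add: L_def)
  have shL: "shiftXY L (\<alpha> i) (b i) = [:[:b i:] - fsh (\<alpha> i) R, 1:]" for i
    by (simp add: L_def shift_lin)
  have shL0: "coeff ([:b i:] - fsh (\<alpha> i) R) 0 = 0" if "i < n" for i
    using Rb that by (simp add: poly_0_coeff_0[symmetric] poly_fsh)
  have GH: "lowvan (s + 1) (fsh (\<alpha> i) H)" if "i < n" for i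
  proof -
    have "poly (fsh (\<alpha> i) G) 0 = 0"
      using that by (auto simp: poly_fsh G_def poly_prod)
    then have "lowvan 1 (fsh (\<alpha> i) G)" by (simp add: lowvan_def poly_0_coeff_0)
    then show ?thesis unfolding H_def fsh_power by (rule lowvan_power)
  qed
  have zeroM: "0 \<in> M_mod \<alpha> b n s l" by (simp add: M_mod_def shift_0 no_low_0)
  have memb: "B i \<in> M_mod \<alpha> b n s l" if "i < l + 1" for i
    using basis that by (simp add: is_module_basis_def)
  have mem: "Nb i \<in> M_mod \<alpha> b n (s + 1) (l + 1)" if "i < l + 2" for i
  proof (cases "i = 0")
    case True
    then show ?thesis using GH by (simp add: Nb_def M_mod_def shift_const no_low_const)
  next
    case False
    then have Bi: "B (i - 1) \<in> M_mod \<alpha> b n s l" using that memb by simp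
    have "degree (B (i - 1) * L) \<le> l + 1"
    proof -
      have "degree (B (i - 1) * L) \<le> degree (B (i - 1)) + degree L" by (rule degree_mult_le)
      then show ?thesis using Bi by (simp add: M_mod_def L_def)
    qed
    moreover have "no_low_monomials (s + 1) (shiftXY (B (i - 1) * L) (\<alpha> k) (b k))" if "k < n" for k
    proof -
      have "no_low_monomials (s + 1) ([:[:b k:] - fsh (\<alpha> k) R, 1:] * shiftXY (B (i - 1)) (\<alpha> k) (b k))"
        by (rule no_low_lin) (use Bi that shL0 in \<open>auto simp: M_mod_def\<close>)
      then show ?thesis by (simp add: shift_mult shL mult.commute)
    qed
    ultimately show ?thesis using False by (simp add: Nb_def M_mod_def)
  qed
  have uniq: "c1 = c2"
    if c1: "\<forall>i\<ge>l + 2. c1 i = 0" and c2: "\<forall>i\<ge>l + 2. c2 i = 0"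
      and eq: "(\<Sum>i<l + 2. smult (c1 i) (Nb i)) = (\<Sum>i<l + 2. smult (c2 i) (Nb i))" for c1 c2
  proof -
    define S1 where "S1 = (\<Sum>i<l + 1. smult (c1 (Suc i)) (B i))"
    define S2 where "S2 = (\<Sum>i<l + 1. smult (c2 (Suc i)) (B i))"
    have eq2: "[:c1 0 * H:] + S1 * L = [:c2 0 * H:] + S2 * L"
      using eq unfolding Nb_def repr_sum S1_def S2_def .
    have "poly ([:c1 0 * H:] + S1 * L) R = poly ([:c2 0 * H:] + S2 * L) R" using eq2 by simp
    then have "c1 0 * H = c2 0 * H" by (simp add: polyL)
    then have e0: "c1 0 = c2 0" using H0 by simp
    with eq2 have "S1 * L = S2 * L" by simp
    then have "S1 = S2" using L0 by simp
    then have "(\<Sum>i<l + 1. smult (c1 (Suc i) - c2 (Suc i)) (B i)) = 0"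
      by (simp add: S1_def S2_def smult_diff_left sum_subtractf)
    then have r1: "0 = (\<Sum>i<l + 1. smult ((\<lambda>i. c1 (Suc i) - c2 (Suc i)) i) (B i))" by simp
    have r2: "(0::'a poly poly) = (\<Sum>i<l + 1. smult ((\<lambda>i. 0) i) (B i))" by simp
    from basis zeroM have ex1: "\<exists>!c. (\<forall>i\<ge>l + 1. c i = 0) \<and> (0::'a poly poly) = (\<Sum>i<l + 1. smult (c i) (B i))"
      unfolding is_module_basis_def by blast
    have d0: "\<forall>i\<ge>l + 1. (\<lambda>i. c1 (Suc i) - c2 (Suc i)) i = 0" using c1 c2 by simp
    have z0: "\<forall>i\<ge>l + 1. (\<lambda>i. 0::'a poly) i = 0" by simp
    from ex1 obtain cc where cc: "\<And>y. (\<forall>i\<ge>l + 1. y i = 0) \<and> (0::'a poly poly) = (\<Sum>i<l + 1. smult (y i) (B i)) \<Longrightarrow> y = cc"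
      by blast
    have "(\<lambda>i. c1 (Suc i) - c2 (Suc i)) = cc" by (rule cc) (use d0 r1 in blast)
    moreover have "(\<lambda>i. 0) = cc" by (rule cc) (use z0 r2 in blast)
    ultimately have "(\<lambda>i. c1 (Suc i) - c2 (Suc i)) = (\<lambda>i. 0)" by simp
    then have eS: "c1 (Suc i) = c2 (Suc i)" for i by (metis right_minus_eq)
    show ?thesis
    proof
      fix i show "c1 i = c2 i" using e0 eS by (cases i) auto
    qed
  qed
  have ex: "\<exists>c. (\<forall>i\<ge>l + 2. c i = 0) \<and> Q = (\<Sum>i<l + 2. smult (c i) (Nb i))"
    if Q: "Q \<in> M_mod \<alpha> b n (s + 1) (l + 1)" for Q
  proof -
    define E where "E = poly Q R"
    define Q' where "Q' = synthetic_div Q R"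
    have QE: "Q = L * Q' + [:E:]"
      using synthetic_div_correct'[of R Q] by (simp add: L_def Q'_def E_def)
    have Eloc: "lowvan (s + 1) (fsh (\<alpha> i) E)" if "i < n" for i
      unfolding E_def by (rule fsh_E_lowvan) (use Q that Rb in \<open>auto simp: M_mod_def\<close>)
    have "\<forall>i<n. [:-\<alpha> i, 1:] ^ (s + 1) dvd E" using Eloc lowvan_undo by blast
    then have "H dvd E" unfolding H_def G_def using prod_lin_dvd dist by blast
    then obtain cE where cE: "E = H * cE" by (auto elim: dvdE)
    have Q'M: "Q' \<in> M_mod \<alpha> b n s l"
    proof -
      have "degree Q' \<le> l" using Q by (auto simp: Q'_def degree_synthetic_div M_mod_def)
      moreover have "no_low_monomials s (shiftXY Q' (\<alpha> i) (b i))" if "i < n" for i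
      proof (rule no_low_lin_rev[OF shL0[OF that]])
        have "shiftXY Q (\<alpha> i) (b i) = shiftXY L (\<alpha> i) (b i) * shiftXY Q' (\<alpha> i) (b i) + [:fsh (\<alpha> i) E:]"
          by (subst QE) (simp add: shift_add shift_mult shift_const)
        then have "[:[:b i:] - fsh (\<alpha> i) R, 1:] * shiftXY Q' (\<alpha> i) (b i)
                = shiftXY Q (\<alpha> i) (b i) - [:fsh (\<alpha> i) E:]" by (simp add: shL)
        moreover have "no_low_monomials (s + 1) (shiftXY Q (\<alpha> i) (b i) - [:fsh (\<alpha> i) E:])"
          by (rule no_low_diff) (use Q that Eloc no_low_const in \<open>auto simp: M_mod_def\<close>)
        ultimately show "no_low_monomials (s + 1) ([:[:b i:] - fsh (\<alpha> i) R, 1:] * shiftXY Q' (\<alpha> i) (b i))"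
          by simp
      qed
      ultimately show ?thesis by (simp add: M_mod_def)
    qed
    from basis Q'M obtain cB where cB: "\<forall>i\<ge>l + 1. cB i = 0" "Q' = (\<Sum>i<l + 1. smult (cB i) (B i))"
      by (auto simp: is_module_basis_def)
    define c where "c = (\<lambda>i. if i = 0 then cE else cB (i - 1))"
    have "(\<Sum>i<l + 2. smult (c i) (Nb i)) = [:cE * H:] + Q' * L"
      unfolding Nb_def repr_sum by (simp add: c_def cB(2))
    also have "\<dots> = Q" using QE cE by (simp add: mult.commute)
    finally have "Q = (\<Sum>i<l + 2. smult (c i) (Nb i))" ..
    moreover have "\<forall>i\<ge>l + 2. c i = 0" using cB(1) by (simp add: c_def)
    ultimately show ?thesis by blast
  qed
  have "is_module_basis (M_mod \<alpha> b n (s + 1) (l + 1)) (l + 2) Nb"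
    unfolding is_module_basis_def
  proof (intro conjI allI impI ballI)
    show "\<And>i. i < l + 2 \<Longrightarrow> Nb i \<in> M_mod \<alpha> b n (s + 1) (l + 1)" by (rule mem)
    fix Q assume "Q \<in> M_mod \<alpha> b n (s + 1) (l + 1)"
    then obtain c where c: "(\<forall>i\<ge>l + 2. c i = 0) \<and> Q = (\<Sum>i<l + 2. smult (c i) (Nb i))"
      using ex by blast
    show "\<exists>!c. (\<forall>i\<ge>l + 2. c i = 0) \<and> Q = (\<Sum>i<l + 2. smult (c i) (Nb i))"
      by (rule ex1I[of _ c]) (use c uniq in auto)
  qed
  then show ?thesis unfolding b_def Nb_def H_def G_def L_def .
qed

end
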